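(* Let $\gamma_N>0$ with $\gamma_N\to0$, and for $a>0$ put $a_N=a\gamma_N$. For each $N$ let $P_{N,a_N}$ be the probability on sequences $(n_j)_{j\ge0}$ of nonnegative integers with $\sum_jn_j=N$ given by $P_{N,a_N}((n_j))\propto e^{-a_N\sum_jjn_j}$, and $\langle n_0\rangle_{N,a_N}$ the expectation of $n_0$. If $N\gamma_N/\ln N\to0$, then for every $a>0$, $\frac1N\langle n_0\rangle_{N,a_N}\to0$ (i.e. $T_c=0$: no Bose–Einstein condensation at any positive temperature). If $N\gamma_N/\ln N\to\infty$, then for every $a>0$, $\frac1N\langle n_0\rangle_{N,a_N}\to1$ (i.e. $T_c=\infty$ and complete Bose–Einstein condensation at all finite temperatures).
   Context: This is the canonical ensemble of $N$ noninteracting bosons in a one-dimensional harmonic trap of scaled frequency $\omega\gamma_N$ at inverse temperature $\beta$, with $a=\hbar\omega\beta$ (so $a>0$ corresponds to $0<T<\infty$). *)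

theory Defs
  imports "HOL-Analysis.Analysis"
begin

definition occ_configs :: "nat \<Rightarrow> (nat \<Rightarrow> nat) set" where
  "occ_configs N = {n. finite {j. n j \<noteq> 0} \<and> (\<Sum>j\<in>{j. n j \<noteq> 0}. n j) = N}"

definition occ_energy :: "(nat \<Rightarrow> nat) \<Rightarrow> nat" where
  "occ_energy n = (\<Sum>j\<in>{j. n j \<noteq> 0}. j * n j)"

definition boltz_weight :: "real \<Rightarrow> (nat \<Rightarrow> nat) \<Rightarrow> real" where
  "boltz_weight b n = exp (- b * real (occ_energy n))"

definition partition_fn :: "nat \<Rightarrow> real \<Rightarrow> real" where
  "partition_fn N b = (\<Sum>\<^sub>\<infinity> n\<in>occ_configs N. boltz_weight b n)"

definition mean_n0 :: "nat \<Rightarrow> real \<Rightarrow> real" where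
  "mean_n0 N b = (\<Sum>\<^sub>\<infinity> n\<in>occ_configs N. real (n 0) * boltz_weight b n) / partition_fn N b"

end

theory Submission
  imports Defs
begin


lemma supp_sum:
  fixes M :: nat
  assumes "\<forall>j\<ge>M. n j = 0" "\<And>j. h j 0 = 0"
  shows "(\<Sum>j\<in>{j. n j \<noteq> 0}. h j (n j)) = (\<Sum>j<M. h j (n j))"
proof (rule sum.mono_neutral_left)
  show "{j. n j \<noteq> 0} \<subseteq> {..<M}" using assms(1) by (auto simp: subset_iff) (meson not_less)
qed (use assms(2) in auto)

lemma occ_iff: "n \<in> occ_configs N \<longleftrightarrow> (\<exists>M. (\<forall>j\<ge>M. n j = 0) \<and> (\<Sum>j<M. n j) = N)"
proof
  assume "n \<in> occ_configs N"
  then have f: "finite {j. n j \<noteq> 0}" and s: "(\<Sum>j\<in>{j. n j \<noteq> 0}. n j) = N"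
    by (auto simp: occ_configs_def)
  from f obtain M where M: "{j. n j \<noteq> 0} \<subseteq> {..<M}" using finite_nat_iff_bounded by blast
  have "\<forall>j\<ge>M. n j = 0" using M by force
  moreover have "(\<Sum>j<M. n j) = N" using supp_sum[of M n "\<lambda>j v. v"] s \<open>\<forall>j\<ge>M. n j = 0\<close> by simp
  ultimately show "\<exists>M. (\<forall>j\<ge>M. n j = 0) \<and> (\<Sum>j<M. n j) = N" by blast
next
  assume "\<exists>M. (\<forall>j\<ge>M. n j = 0) \<and> (\<Sum>j<M. n j) = N"
  then obtain M where M: "\<forall>j\<ge>M. n j = 0" "(\<Sum>j<M. n j) = N" by blast
  have "{j. n j \<noteq> 0} \<subseteq> {..<M}" using M(1) by (auto simp: subset_iff) (metis not_less not_less_zero)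
  then have "finite {j. n j \<noteq> 0}" using finite_subset by blast
  then show "n \<in> occ_configs N" using supp_sum[of M n "\<lambda>j v. v"] M by (simp add: occ_configs_def)
qed

lemma energy_eq: "\<forall>j\<ge>M. n j = 0 \<Longrightarrow> occ_energy n = (\<Sum>j<M. j * n j)"
  unfolding occ_energy_def using supp_sum[of M n "\<lambda>j v. j * v"] by simp

definition up :: "(nat \<Rightarrow> nat) \<Rightarrow> nat \<Rightarrow> nat" where "up n = n(0 := Suc (n 0))"
definition sh :: "(nat \<Rightarrow> nat) \<Rightarrow> nat \<Rightarrow> nat" where "sh n = (\<lambda>j. if j = 0 then 0 else n (j - 1))"
definition dn :: "(nat \<Rightarrow> nat) \<Rightarrow> nat \<Rightarrow> nat" where "dn n = (\<lambda>j. n (Suc j))"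

lemma up_bound: "\<forall>j\<ge>M. n j = 0 \<Longrightarrow> \<forall>j\<ge>Suc M. up n j = 0"
  by (auto simp: up_def)
lemma sh_bound: "\<forall>j\<ge>M. n j = 0 \<Longrightarrow> \<forall>j\<ge>Suc M. sh n j = 0"
  by (auto simp: sh_def)

lemma up_tot: "(\<Sum>j<Suc M. up n j) = Suc (\<Sum>j<Suc M. n j)"
  by (simp add: sum.lessThan_Suc_shift up_def del: sum.lessThan_Suc)
lemma up_en: "(\<Sum>j<Suc M. j * up n j) = (\<Sum>j<Suc M. j * n j)"
  by (simp add: sum.lessThan_Suc_shift up_def del: sum.lessThan_Suc)
lemma sh_tot: "(\<Sum>j<Suc M. sh n j) = (\<Sum>j<M. n j)"
  by (simp add: sum.lessThan_Suc_shift sh_def del: sum.lessThan_Suc)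
lemma sh_en: "(\<Sum>j<Suc M. j * sh n j) = (\<Sum>j<M. j * n j) + (\<Sum>j<M. n j)"
  by (simp add: sum.lessThan_Suc_shift sh_def sum.distrib del: sum.lessThan_Suc)

lemma bound_Suc: "\<forall>j\<ge>M. n j = 0 \<Longrightarrow> \<forall>j\<ge>Suc M. n j = 0" by auto

lemma up_mem: "n \<in> occ_configs N \<Longrightarrow> up n \<in> occ_configs (Suc N)"
proof -
  assume "n \<in> occ_configs N"
  then obtain M where M: "\<forall>j\<ge>M. n j = 0" "(\<Sum>j<M. n j) = N" by (auto simp: occ_iff)
  have "(\<Sum>j<Suc M. n j) = N" using M by simp
  then show ?thesis unfolding occ_iff using up_bound[OF M(1)] up_tot[where M=M and n=n] by metis
qed

lemma up_energy: "n \<in> occ_configs N \<Longrightarrow> occ_energy (up n) = occ_energy n"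
proof -
  assume "n \<in> occ_configs N"
  then obtain M where M: "\<forall>j\<ge>M. n j = 0" by (auto simp: occ_iff)
  show ?thesis using energy_eq[OF bound_Suc[OF M]] energy_eq[OF up_bound[OF M]] up_en by metis
qed

lemma sh_mem: "n \<in> occ_configs N \<Longrightarrow> sh n \<in> occ_configs N"
proof -
  assume "n \<in> occ_configs N"
  then obtain M where M: "\<forall>j\<ge>M. n j = 0" "(\<Sum>j<M. n j) = N" by (auto simp: occ_iff)
  then show ?thesis unfolding occ_iff using sh_bound[OF M(1)] sh_tot[where M=M and n=n] by metis
qed

lemma sh_energy: "n \<in> occ_configs N \<Longrightarrow> occ_energy (sh n) = occ_energy n + N"
proof -
  assume "n \<in> occ_configs N"
  then obtain M where M: "\<forall>j\<ge>M. n j = 0" "(\<Sum>j<M. n j) = N" by (auto simp: occ_iff)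
  show ?thesis using energy_eq[OF M(1)] energy_eq[OF sh_bound[OF M(1)]] sh_en[where M=M and n=n] M(2) by metis
qed

lemma inj_up: "inj up"
proof (rule injI)
  fix x y assume "up x = up y"
  then have "\<And>j. up x j = up y j" by simp
  then show "x = y" by (auto simp: up_def fun_eq_iff split: if_splits) (metis nat.inject)
qed

lemma inj_sh: "inj sh"
proof (rule injI)
  fix x y assume "sh x = sh y"
  then have "\<And>j. sh x (Suc j) = sh y (Suc j)" by simp
  then show "x = y" by (auto simp: sh_def fun_eq_iff)
qed

lemma up_inv: "n 0 \<noteq> 0 \<Longrightarrow> n = up (n(0 := n 0 - 1))"
  by (auto simp: up_def fun_eq_iff)
lemma sh_inv: "n 0 = 0 \<Longrightarrow> n = sh (dn n)"
  by (auto simp: sh_def dn_def fun_eq_iff)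

lemma down_mem: "n \<in> occ_configs (Suc N) \<Longrightarrow> n 0 \<noteq> 0 \<Longrightarrow> n(0 := n 0 - 1) \<in> occ_configs N"
proof -
  assume "n \<in> occ_configs (Suc N)" "n 0 \<noteq> 0"
  then have "up (n(0 := n 0 - 1)) \<in> occ_configs (Suc N)" using up_inv by metis
  then obtain M where M: "\<forall>j\<ge>M. up (n(0 := n 0 - 1)) j = 0" "(\<Sum>j<M. up (n(0 := n 0 - 1)) j) = Suc N"
    by (auto simp: occ_iff)
  let ?m = "n(0 := n 0 - 1)"
  have M1: "\<forall>j\<ge>Suc M. up ?m j = 0" using M(1) by auto
  have "(\<Sum>j<Suc M. up ?m j) = Suc N" using M by simp
  then have "(\<Sum>j<Suc M. ?m j) = N" using up_tot[where M=M and n="?m"] by simp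
  moreover have "\<forall>j\<ge>Suc M. ?m j = 0" using M1 by (auto simp: up_def split: if_splits)
  ultimately show ?thesis unfolding occ_iff by blast
qed

lemma dn_mem: "n \<in> occ_configs N \<Longrightarrow> n 0 = 0 \<Longrightarrow> dn n \<in> occ_configs N"
proof -
  assume a: "n \<in> occ_configs N" "n 0 = 0"
  then obtain M where M: "\<forall>j\<ge>M. n j = 0" "(\<Sum>j<M. n j) = N" by (auto simp: occ_iff)
  have "(\<Sum>j<Suc M. n j) = N" using M by simp
  then have "(\<Sum>j<M. dn n j) = N" using a(2) by (simp add: sum.lessThan_Suc_shift dn_def del: sum.lessThan_Suc)
  moreover have "\<forall>j\<ge>M. dn n j = 0" using M(1) by (auto simp: dn_def)
  ultimately show ?thesis unfolding occ_iff by blast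
qed

lemma occ_split: "occ_configs (Suc N) = up ` occ_configs N \<union> sh ` occ_configs (Suc N)"
proof (intro equalityI subsetI)
  fix n assume n: "n \<in> occ_configs (Suc N)"
  show "n \<in> up ` occ_configs N \<union> sh ` occ_configs (Suc N)"
  proof (cases "n 0 = 0")
    case True then show ?thesis using sh_inv dn_mem n by blast
  next
    case False then show ?thesis using up_inv down_mem n by blast
  qed
qed (auto intro: up_mem sh_mem)

lemma occ_disj: "up ` A \<inter> sh ` B = {}"
  by (auto simp: up_def sh_def fun_eq_iff) (metis nat.distinct(1))

lemma occ0: "occ_configs 0 = {\<lambda>_. 0}"
proof (intro equalityI subsetI)
  fix n assume "n \<in> occ_configs 0"
  then obtain M where M: "\<forall>j\<ge>M. n j = 0" "(\<Sum>j<M. n j) = 0" by (auto simp: occ_iff)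
  then have "\<forall>j. n j = 0" by (metis lessThan_iff finite_lessThan not_le sum_eq_0_iff)
  then show "n \<in> {\<lambda>_. 0}" by auto
qed (auto simp: occ_iff)

lemma n0_le: "n \<in> occ_configs N \<Longrightarrow> n 0 \<le> N"
proof -
  assume "n \<in> occ_configs N"
  then obtain M where M: "\<forall>j\<ge>M. n j = 0" "(\<Sum>j<M. n j) = N" by (auto simp: occ_iff)
  have "(\<Sum>j<Suc M. n j) = N" using M by simp
  then show ?thesis by (simp add: sum.lessThan_Suc_shift del: sum.lessThan_Suc)
qed

lemma occ_bounded: "n \<in> occ_configs N \<Longrightarrow> \<exists>M. \<forall>j\<ge>M. n j = 0"
  by (auto simp: occ_iff)



lemma w_up: "n \<in> occ_configs N \<Longrightarrow> boltz_weight b (up n) = boltz_weight b n"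
  by (simp add: boltz_weight_def up_energy)
lemma w_sh: "n \<in> occ_configs N \<Longrightarrow> boltz_weight b (sh n) = exp (- b * real N) * boltz_weight b n"
  by (simp add: boltz_weight_def sh_energy algebra_simps exp_add[symmetric])
lemma w_pos: "boltz_weight b n > 0" by (simp add: boltz_weight_def)
lemma w_zero: "boltz_weight b (\<lambda>_. 0) = 1" by (simp add: boltz_weight_def occ_energy_def)

definition BB :: "real \<Rightarrow> nat \<Rightarrow> real" where
  "BB b N = (\<Prod>k\<in>{1..N}. 1 / (1 - exp (- b * real k)))"

lemma q_lt: "b > 0 \<Longrightarrow> k \<ge> 1 \<Longrightarrow> exp (- b * real k) < 1"
  by simp

lemma BB_ge1: assumes "b > 0" shows "BB b N \<ge> 1"
  unfolding BB_def
proof (rule prod_ge_1)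
  fix k assume "k \<in> {1..N}"
  then have "exp (- b * real k) < 1" "exp (- b * real k) > 0" using assms by auto
  then show "1 \<le> 1 / (1 - exp (- b * real k))" by (simp add: field_simps)
qed

lemma BB_Suc: assumes "b > 0" shows "BB b N = (1 - exp (- b * real (Suc N))) * BB b (Suc N)"
proof -
  have "exp (- b * real (Suc N)) < 1" using assms by simp
  then show ?thesis unfolding BB_def by (simp add: prod.nat_ivl_Suc' field_simps)
qed

lemma sum_le1: "finite F \<Longrightarrow> F \<subseteq> {\<lambda>_. 0} \<Longrightarrow> sum (boltz_weight b) F \<le> 1"
proof -
  assume "finite F" "F \<subseteq> {\<lambda>_. 0}"
  then have "F = {} \<or> F = {\<lambda>_. 0}" by blast
  then show ?thesis by (auto simp: w_zero)
qed

lemma fin_bound: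
  assumes b: "b > 0"
  shows "\<forall>N F. finite F \<longrightarrow> F \<subseteq> occ_configs N \<longrightarrow> (\<forall>n\<in>F. \<forall>j\<ge>M. n j = 0)
           \<longrightarrow> sum (boltz_weight b) F \<le> BB b N"
proof (induction M)
  case 0
  show ?case
  proof (intro allI impI)
    fix N F assume F: "finite (F :: (nat \<Rightarrow> nat) set)" "F \<subseteq> occ_configs N" "\<forall>n\<in>F. \<forall>j\<ge>0. n j = 0"
    then have "F \<subseteq> {\<lambda>_. 0}" by auto
    then show "sum (boltz_weight b) F \<le> BB b N" using sum_le1[OF F(1) \<open>F \<subseteq> {\<lambda>_. 0}\<close>, of b] BB_ge1[OF b, of N] by linarith
  qed
next
  case (Suc M)
  note IHM = Suc.IH
  show ?case
  proof (rule allI)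
    fix N show "\<forall>F. finite F \<longrightarrow> F \<subseteq> occ_configs N \<longrightarrow> (\<forall>n\<in>F. \<forall>j\<ge>Suc M. n j = 0)
           \<longrightarrow> sum (boltz_weight b) F \<le> BB b N"
    proof (induction N)
      case 0
      show ?case
      proof (intro allI impI)
        fix F assume F: "finite (F :: (nat \<Rightarrow> nat) set)" "F \<subseteq> occ_configs 0"
        then have "F \<subseteq> {\<lambda>_. 0}" using occ0 by simp
        then show "sum (boltz_weight b) F \<le> BB b 0"
          using sum_le1[OF F(1), of b] BB_ge1[OF b, of 0] by linarith
      qed
    next
      case (Suc N)
      show ?case
      proof (intro allI impI)
        fix F assume F: "finite (F :: (nat \<Rightarrow> nat) set)" "F \<subseteq> occ_configs (Suc N)"
          "\<forall>n\<in>F. \<forall>j\<ge>Suc M. n j = 0"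
        define w where "w = boltz_weight b"
        define q where "q = exp (- b * real (Suc N))"
        define F1 where "F1 = {n\<in>F. n 0 \<noteq> 0}"
        define G1 where "G1 = (\<lambda>n. n(0 := n 0 - 1)) ` F1"
        define F0 where "F0 = {n\<in>F. n 0 = 0}"
        define G0 where "G0 = dn ` F0"
        have sF: "sum w F = sum w F1 + sum w F0"
        proof -
          have "F = F1 \<union> F0" "F1 \<inter> F0 = {}" unfolding F1_def F0_def by auto
          moreover have "finite F1" "finite F0" using F(1) unfolding F1_def F0_def by auto
          ultimately show ?thesis by (metis sum.union_disjoint)
        qed
        have F1eq: "F1 = up ` G1"
        proof -
          have "up ` G1 = (\<lambda>n. up (n(0 := n 0 - 1))) ` F1" unfolding G1_def by (simp add: image_image)
          also have "\<dots> = id ` F1"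
            by (rule image_cong) (auto simp: F1_def up_def fun_eq_iff)
          finally show ?thesis by simp
        qed
        have G1sub: "G1 \<subseteq> occ_configs N" unfolding G1_def F1_def using F(2) down_mem by auto
        have s1: "sum w F1 = sum w G1"
        proof -
          have "sum w F1 = sum (w \<circ> up) G1" unfolding F1eq
            by (rule sum.reindex) (meson inj_up inj_on_subset subset_UNIV)
          also have "\<dots> = sum w G1" using G1sub by (auto simp: w_def w_up intro!: sum.cong)
          finally show ?thesis .
        qed
        have "sum w G1 \<le> BB b N"
        proof -
          have "finite G1" using F(1) unfolding G1_def F1_def by auto
          moreover have "\<forall>n\<in>G1. \<forall>j\<ge>Suc M. n j = 0" using F(3) unfolding G1_def F1_def by auto
          ultimately show ?thesis using Suc.IH[rule_format, of G1] G1sub unfolding w_def by blast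
        qed
        have F0eq: "F0 = sh ` G0"
        proof -
          have "sh ` G0 = (\<lambda>n. sh (dn n)) ` F0" unfolding G0_def by (simp add: image_image)
          also have "\<dots> = id ` F0"
            by (rule image_cong) (auto simp: F0_def sh_def dn_def fun_eq_iff)
          finally show ?thesis by simp
        qed
        have G0sub: "G0 \<subseteq> occ_configs (Suc N)" unfolding G0_def F0_def using F(2) dn_mem by auto
        have s0: "sum w F0 = q * sum w G0"
        proof -
          have "sum w F0 = sum (w \<circ> sh) G0" unfolding F0eq
            by (rule sum.reindex) (meson inj_sh inj_on_subset subset_UNIV)
          also have "\<dots> = sum (\<lambda>n. q * w n) G0" using G0sub
            by (intro sum.cong) (auto simp: w_def q_def w_sh)
          finally show ?thesis by (simp add: sum_distrib_left)
        qed
        have "sum w G0 \<le> BB b (Suc N)"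
        proof -
          have "finite G0" using F(1) unfolding G0_def F0_def by auto
          moreover have "\<forall>n\<in>G0. \<forall>j\<ge>M. n j = 0" using F(3) unfolding G0_def F0_def dn_def by auto
          ultimately show ?thesis using IHM[rule_format, of G0 "Suc N"] G0sub unfolding w_def by blast
        qed
        have q0: "q \<ge> 0" unfolding q_def by simp
        have "sum w F \<le> BB b N + q * BB b (Suc N)"
          unfolding sF s1 s0 using \<open>sum w G1 \<le> BB b N\<close> mult_left_mono[OF \<open>sum w G0 \<le> BB b (Suc N)\<close> q0]
          by (rule add_mono)
        also have "\<dots> = BB b (Suc N)" using BB_Suc[OF b, of N] unfolding q_def by (simp add: algebra_simps)
        finally show "sum (boltz_weight b) F \<le> BB b (Suc N)" unfolding w_def .
      qed
    qed
  qed
qed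

lemma summ: assumes b: "b > 0" shows "boltz_weight b summable_on occ_configs N"
proof (rule nonneg_bdd_above_summable_on)
  show "\<And>x. x \<in> occ_configs N \<Longrightarrow> 0 \<le> boltz_weight b x" using w_pos less_imp_le by blast
  show "bdd_above (sum (boltz_weight b) ` {F. F \<subseteq> occ_configs N \<and> finite F})"
  proof (rule bdd_aboveI2[where M="BB b N"])
    fix F assume "F \<in> {F. F \<subseteq> occ_configs N \<and> finite F}"
    then have F: "F \<subseteq> occ_configs N" "finite F" by auto
    have "finite (\<Union>n\<in>F. {j. n j \<noteq> 0})"
    proof (rule finite_UN_I)
      show "finite F" by (rule F(2))
      fix n assume "n \<in> F"
      then have "n \<in> occ_configs N" using F(1) by blast
      then show "finite {j. n j \<noteq> 0}" unfolding occ_configs_def by simp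
    qed
    then obtain M where M: "(\<Union>n\<in>F. {j. n j \<noteq> 0}) \<subseteq> {..<M}" using finite_nat_iff_bounded by blast
    have "\<forall>n\<in>F. \<forall>j\<ge>M. n j = 0" using M by (auto simp: subset_iff)
    then show "sum (boltz_weight b) F \<le> BB b N" using fin_bound[OF b, of M, rule_format, of F N] F by blast
  qed
qed



definition Mn :: "nat \<Rightarrow> real \<Rightarrow> real" where
  "Mn N b = (\<Sum>\<^sub>\<infinity> n\<in>occ_configs N. real (n 0) * boltz_weight b n)"

lemma summ_n0: assumes b: "b > 0"
  shows "(\<lambda>n. real (n 0) * boltz_weight b n) summable_on occ_configs N"
proof (rule summable_on_comparison_test)
  show "(\<lambda>n. real N * boltz_weight b n) summable_on occ_configs N"
    by (rule summable_on_cmult_right[OF summ[OF b]])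
  fix n assume "n \<in> occ_configs N"
  then have "real (n 0) \<le> real N" using n0_le by simp
  then show "real (n 0) * boltz_weight b n \<le> real N * boltz_weight b n"
    using w_pos[of b n] by (simp add: mult_right_mono)
  show "0 \<le> real (n 0) * boltz_weight b n" using w_pos[of b n] by simp
qed

lemma up0: "up n 0 = Suc (n 0)" by (simp add: up_def)

lemma inj_on_up: "inj_on up A" by (meson inj_up inj_on_subset subset_UNIV)
lemma inj_on_sh: "inj_on sh A" by (meson inj_sh inj_on_subset subset_UNIV)

lemma up_sub: "up ` occ_configs N \<subseteq> occ_configs (Suc N)" using up_mem by blast
lemma sh_sub: "sh ` occ_configs N \<subseteq> occ_configs N" using sh_mem by blast

lemma split_infsum:
  fixes f :: "(nat \<Rightarrow> nat) \<Rightarrow> real"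
  assumes "f summable_on occ_configs (Suc N)"
  shows "infsum f (occ_configs (Suc N)) = infsum (f \<circ> up) (occ_configs N) + infsum (f \<circ> sh) (occ_configs (Suc N))"
proof -
  have a: "f summable_on up ` occ_configs N" by (rule summable_on_subset[OF assms up_sub])
  have c: "f summable_on sh ` occ_configs (Suc N)" by (rule summable_on_subset[OF assms sh_sub])
  have "infsum f (occ_configs (Suc N)) = infsum f (up ` occ_configs N \<union> sh ` occ_configs (Suc N))"
    using occ_split by metis
  also have "\<dots> = infsum f (up ` occ_configs N) + infsum f (sh ` occ_configs (Suc N))"
    by (rule infsum_Un_disjoint[OF a c occ_disj])
  also have "\<dots> = infsum (f \<circ> up) (occ_configs N) + infsum (f \<circ> sh) (occ_configs (Suc N))"
    by (simp add: infsum_reindex inj_on_up inj_on_sh)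
  finally show ?thesis .
qed

lemma Z_rec: assumes b: "b > 0"
  shows "partition_fn (Suc N) b = partition_fn N b + exp (- b * real (Suc N)) * partition_fn (Suc N) b"
proof -
  have "partition_fn (Suc N) b = infsum (boltz_weight b \<circ> up) (occ_configs N) + infsum (boltz_weight b \<circ> sh) (occ_configs (Suc N))"
    unfolding partition_fn_def by (rule split_infsum[OF summ[OF b]])
  also have "infsum (boltz_weight b \<circ> up) (occ_configs N) = partition_fn N b"
    unfolding partition_fn_def by (rule infsum_cong) (simp add: w_up)
  also have "infsum (boltz_weight b \<circ> sh) (occ_configs (Suc N)) = infsum (\<lambda>n. exp (- b * real (Suc N)) * boltz_weight b n) (occ_configs (Suc N))"
    by (rule infsum_cong) (simp add: w_sh del: of_nat_Suc)
  also have "\<dots> = exp (- b * real (Suc N)) * partition_fn (Suc N) b"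
    unfolding partition_fn_def by (rule infsum_cmult_right')
  finally show ?thesis .
qed

lemma M_rec: assumes b: "b > 0"
  shows "Mn (Suc N) b = Mn N b + partition_fn N b"
proof -
  let ?f = "\<lambda>n. real (n 0) * boltz_weight b n"
  have "Mn (Suc N) b = infsum (?f \<circ> up) (occ_configs N) + infsum (?f \<circ> sh) (occ_configs (Suc N))"
    unfolding Mn_def by (rule split_infsum[OF summ_n0[OF b]])
  also have "infsum (?f \<circ> up) (occ_configs N) = infsum (\<lambda>n. ?f n + boltz_weight b n) (occ_configs N)"
    by (rule infsum_cong) (simp add: w_up up0 algebra_simps)
  also have "\<dots> = Mn N b + partition_fn N b"
    unfolding Mn_def partition_fn_def by (rule infsum_add[OF summ_n0[OF b] summ[OF b]])
  also have "infsum (?f \<circ> sh) (occ_configs (Suc N)) = 0"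
    by (rule infsum_0) (simp add: sh_def)
  finally show ?thesis by simp
qed

lemma Z0: "partition_fn 0 b = 1" by (simp add: partition_fn_def occ0 w_zero)
lemma M0: "Mn 0 b = 0" by (simp add: Mn_def occ0)

lemma Z_pos: assumes b: "b > 0" shows "partition_fn N b > 0"
proof (induction N)
  case 0 then show ?case by (simp add: Z0)
next
  case (Suc N)
  have q: "exp (- b * real (Suc N)) < 1" using b by simp
  have "partition_fn N b = (1 - exp (- b * real (Suc N))) * partition_fn (Suc N) b"
    using Z_rec[OF b, of N] by (simp add: algebra_simps)
  then show ?case using Suc q by (metis zero_less_mult_pos diff_gt_0_iff_gt)
qed

lemma mean_eq: "mean_n0 N b = Mn N b / partition_fn N b"
  by (simp add: mean_n0_def Mn_def)

lemma mean0: "mean_n0 0 b = 0" by (simp add: mean_eq M0)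

lemma mean_rec: assumes b: "b > 0"
  shows "mean_n0 (Suc N) b = (1 - exp (- b * real (Suc N))) * (1 + mean_n0 N b)"
proof -
  define q where "q = exp (- b * real (Suc N))"
  have Zs: "partition_fn N b = (1 - q) * partition_fn (Suc N) b"
    using Z_rec[OF b, of N] by (simp add: algebra_simps q_def)
  have p: "partition_fn N b > 0" "partition_fn (Suc N) b > 0" using Z_pos[OF b] by auto
  have "mean_n0 (Suc N) b = (Mn N b + partition_fn N b) / partition_fn (Suc N) b"
    by (simp add: mean_eq M_rec[OF b])
  also have "\<dots> = (partition_fn N b / partition_fn (Suc N) b) * (1 + mean_n0 N b)"
    using p by (simp add: mean_eq field_simps)
  also have "partition_fn N b / partition_fn (Suc N) b = 1 - q" using Zs p by simp
  finally show ?thesis by (simp add: q_def)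
qed



lemma r_nonneg: assumes b: "b > 0" shows "mean_n0 N b \<ge> 0"
proof (induction N)
  case 0 then show ?case by (simp add: mean0)
next
  case (Suc N)
  have "exp (- b * real (Suc N)) \<le> 1" using b by simp
  then show ?case using Suc by (simp add: mean_rec[OF b] del: of_nat_Suc)
qed

lemma r_le: assumes b: "b > 0" shows "mean_n0 N b \<le> real N"
proof (induction N)
  case 0 then show ?case by (simp add: mean0)
next
  case (Suc N)
  have q: "exp (- b * real (Suc N)) \<le> 1" "exp (- b * real (Suc N)) \<ge> 0" using b by auto
  have "mean_n0 (Suc N) b = (1 - exp (- b * real (Suc N))) * (1 + mean_n0 N b)" by (rule mean_rec[OF b])
  also have "\<dots> \<le> 1 * (1 + mean_n0 N b)"
    using q r_nonneg[OF b, of N] by (intro mult_right_mono) auto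
  also have "\<dots> \<le> real (Suc N)" using Suc by simp
  finally show ?case .
qed

lemma r_up: assumes b: "b > 0" shows "m \<le> N \<Longrightarrow> mean_n0 m b \<le> exp (b * real N) - 1"
proof (induction m)
  case 0 then show ?case using b by (simp add: mean0)
next
  case (Suc m)
  define q where "q = exp (- b * real N)"
  have qq: "q * exp (b * real N) = 1" unfolding q_def by (simp add: exp_add[symmetric])
  have "exp (- b * real (Suc m)) \<ge> q" unfolding q_def using Suc.prems b by simp
  then have "1 - exp (- b * real (Suc m)) \<le> 1 - q" by simp
  moreover have "1 - exp (- b * real (Suc m)) \<ge> 0" using b by simp
  moreover have "1 + mean_n0 m b \<le> exp (b * real N)" using Suc by simp
  moreover have "1 + mean_n0 m b \<ge> 0" using r_nonneg[OF b, of m] by simp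
  moreover have "q \<le> 1" unfolding q_def using b by simp
  ultimately have "(1 - exp (- b * real (Suc m))) * (1 + mean_n0 m b) \<le> (1 - q) * exp (b * real N)"
    by (intro mult_mono) auto
  also have "\<dots> = exp (b * real N) - 1" using qq by (simp add: algebra_simps)
  finally show ?case by (simp add: mean_rec[OF b] del: of_nat_Suc)
qed

lemma r_low: assumes b: "b > 0"
  shows "m \<le> N \<Longrightarrow> real m - mean_n0 m b \<le> real K + real m * real N * exp (- b * real K)"
proof (induction m)
  case 0 then show ?case by (simp add: mean0)
next
  case (Suc m)
  show ?case
  proof (cases "Suc m \<le> K")
    case True
    then have "real (Suc m) - mean_n0 (Suc m) b \<le> real K" using r_nonneg[OF b, of "Suc m"] by simp
    moreover have "real (Suc m) * real N * exp (- b * real K) \<ge> 0" by simp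
    ultimately show ?thesis by linarith
  next
    case False
    define q where "q = exp (- b * real (Suc m))"
    define e where "e = exp (- b * real K)"
    have IH: "real m - mean_n0 m b \<le> real K + real m * real N * e" using Suc e_def by simp
    have "q \<le> e" unfolding q_def e_def using False b by simp
    moreover have "q \<ge> 0" unfolding q_def by simp
    moreover have "1 + mean_n0 m b \<le> real N" using r_le[OF b, of m] Suc.prems by simp
    moreover have "1 + mean_n0 m b \<ge> 0" using r_nonneg[OF b, of m] by simp
    ultimately have qe: "q * (1 + mean_n0 m b) \<le> e * real N" by (intro mult_mono) auto
    have "real (Suc m) - mean_n0 (Suc m) b = (real m - mean_n0 m b) + q * (1 + mean_n0 m b)"
      by (simp add: mean_rec[OF b] q_def algebra_simps del: of_nat_Suc)
    also have "\<dots> \<le> real K + real m * real N * e + e * real N" using IH qe by linarith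
    also have "\<dots> = real K + real (Suc m) * real N * e" by (simp add: algebra_simps)
    finally show ?thesis unfolding e_def .
  qed
qed



lemma case1:
  fixes \<gamma> :: "nat \<Rightarrow> real"
  assumes pos: "\<And>N. \<gamma> N > 0" and a: "a > 0"
    and H: "(\<lambda>N. real N * \<gamma> N / ln (real N)) \<longlonglongrightarrow> 0"
  shows "(\<lambda>N. mean_n0 N (a * \<gamma> N) / real N) \<longlonglongrightarrow> 0"
proof -
  let ?g = "\<lambda>N. real N * \<gamma> N / ln (real N)"
  have lnlim: "filterlim (\<lambda>N. ln (real N)) at_top sequentially"
    by (rule filterlim_compose[OF ln_at_top filterlim_real_sequentially])
  have l1: "(\<lambda>N. a * ?g N - 1) \<longlonglongrightarrow> -1"
    using tendsto_diff[OF tendsto_mult[OF tendsto_const H, of a] tendsto_const[of 1]] by simp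
  have bot: "filterlim (\<lambda>N. (a * ?g N - 1) * ln (real N)) at_bot sequentially"
    by (rule filterlim_tendsto_neg_mult_at_bot[OF l1 _ lnlim]) simp
  have e0: "(\<lambda>N. exp ((a * ?g N - 1) * ln (real N))) \<longlonglongrightarrow> 0"
    by (rule filterlim_compose[OF exp_at_bot bot])
  have ev: "eventually (\<lambda>N. exp ((a * ?g N - 1) * ln (real N)) = exp (a * \<gamma> N * real N) / real N) sequentially"
    using eventually_ge_at_top[of "2::nat"]
  proof (rule eventually_mono)
    fix N :: nat assume N: "2 \<le> N"
    then have l: "ln (real N) > 0" by simp
    have "(a * ?g N - 1) * ln (real N) = a * \<gamma> N * real N - ln (real N)"
      using l by (simp add: field_simps)
    then show "exp ((a * ?g N - 1) * ln (real N)) = exp (a * \<gamma> N * real N) / real N"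
      using N by (simp add: exp_diff)
  qed
  have h0: "(\<lambda>N. exp (a * \<gamma> N * real N) / real N) \<longlonglongrightarrow> 0"
    using tendsto_cong[OF ev] e0 by simp
  show ?thesis
  proof (rule tendsto_sandwich[OF _ _ tendsto_const h0])
    show "eventually (\<lambda>N. 0 \<le> mean_n0 N (a * \<gamma> N) / real N) sequentially"
      using r_nonneg[of "a * \<gamma> _"] pos a by (intro always_eventually allI) simp
    show "eventually (\<lambda>N. mean_n0 N (a * \<gamma> N) / real N \<le> exp (a * \<gamma> N * real N) / real N) sequentially"
    proof (intro always_eventually allI)
      fix N
      have b: "a * \<gamma> N > 0" using pos a by simp
      have "mean_n0 N (a * \<gamma> N) \<le> exp (a * \<gamma> N * real N)" using r_up[OF b, of N N] by simp
      then show "mean_n0 N (a * \<gamma> N) / real N \<le> exp (a * \<gamma> N * real N) / real N"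
        by (simp add: divide_right_mono)
    qed
  qed
qed

lemma case2:
  fixes \<gamma> :: "nat \<Rightarrow> real"
  assumes pos: "\<And>N. \<gamma> N > 0" and a: "a > 0"
    and H: "filterlim (\<lambda>N. real N * \<gamma> N / ln (real N)) at_top sequentially"
  shows "(\<lambda>N. mean_n0 N (a * \<gamma> N) / real N) \<longlonglongrightarrow> 1"
proof -
  let ?g = "\<lambda>N. real N * \<gamma> N / ln (real N)"
  let ?L = "\<lambda>N. 1 - ((2 / a) * inverse (?g N) + 2 / real N)"
  have L1: "?L \<longlonglongrightarrow> 1"
    using tendsto_diff[OF tendsto_const[of 1] tendsto_add[OF tendsto_mult[OF tendsto_const[of "2/a"] tendsto_inverse_0_at_top[OF H]] lim_const_over_n[of 2]]]
    by simp
  show ?thesis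
  proof (rule tendsto_sandwich[OF _ _ L1 tendsto_const])
    show "eventually (\<lambda>N. mean_n0 N (a * \<gamma> N) / real N \<le> 1) sequentially"
      using eventually_ge_at_top[of "1::nat"]
    proof (rule eventually_mono)
      fix N :: nat assume "1 \<le> N"
      have b: "a * \<gamma> N > 0" using pos a by simp
      show "mean_n0 N (a * \<gamma> N) / real N \<le> 1" using r_le[OF b, of N] \<open>1 \<le> N\<close> by simp
    qed
    show "eventually (\<lambda>N. ?L N \<le> mean_n0 N (a * \<gamma> N) / real N) sequentially"
      using eventually_ge_at_top[of "2::nat"]
    proof (rule eventually_mono)
      fix N :: nat assume N: "2 \<le> N"
      define b where "b = a * \<gamma> N"
      define l where "l = ln (real N)"
      have b0: "b > 0" using pos a by (simp add: b_def)
      have l0: "l > 0" using N by (simp add: l_def)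
      have N0: "real N > 0" using N by simp
      define K where "K = nat \<lceil>2 * l / b\<rceil>"
      have K1: "real K \<ge> 2 * l / b" unfolding K_def using l0 b0 by linarith
      have x0: "2 * l / b \<ge> 0" using l0 b0 by simp
      have "real K = real_of_int \<lceil>2 * l / b\<rceil>" unfolding K_def using x0 by simp
      then have K2: "real K \<le> 2 * l / b + 1" using ceiling_correct[of "2 * l / b"] by linarith
      have "2 * l \<le> real K * b" using K1 pos_divide_le_eq[OF b0] by blast
      then have "b * real K \<ge> 2 * l" by (simp add: mult.commute)
      then have E1: "exp (- b * real K) \<le> exp (- (2 * l))" by simp
      have e: "exp l = real N" using N0 by (simp add: l_def)
      have "exp (2 * l) = real N * real N" by (simp only: mult_2 exp_add e)
      then have E2: "exp (- (2 * l)) = 1 / (real N * real N)" by (simp add: exp_minus inverse_eq_divide)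
      have "real N * real N * exp (- b * real K) \<le> real N * real N * (1 / (real N * real N))"
        using E1 E2 by (intro mult_left_mono) simp_all
      also have "\<dots> = 1" using N0 by simp
      finally have "real N * real N * exp (- b * real K) \<le> 1" .
      moreover have "real N - mean_n0 N b \<le> real K + real N * real N * exp (- b * real K)"
        by (rule r_low[OF b0]) simp
      ultimately have A: "real N - mean_n0 N b \<le> 2 * l / b + 2"
        using K2 by linarith
      have "(real N - mean_n0 N b) / real N \<le> (2 * l / b + 2) / real N"
        using divide_right_mono[OF A, of "real N"] N0 by simp
      moreover have "(real N - mean_n0 N b) / real N = 1 - mean_n0 N b / real N"
        using N0 by (simp add: diff_divide_distrib)
      ultimately have B: "1 - (2 * l / b + 2) / real N \<le> mean_n0 N b / real N" by linarith
      have g: "?g N = real N * \<gamma> N / l" by (simp add: l_def)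
      have gn: "\<gamma> N > 0" by (rule pos)
      have "(2 * l / b + 2) / real N = (2 / a) * inverse (real N * \<gamma> N / l) + 2 / real N"
        using N0 l0 a gn unfolding b_def by (simp add: field_simps)
      then have "(2 * l / b + 2) / real N = (2 / a) * inverse (?g N) + 2 / real N" unfolding g .
      with B have "?L N \<le> mean_n0 N b / real N" by simp
      then show "?L N \<le> mean_n0 N (a * \<gamma> N) / real N" by (simp add: b_def)
    qed
  qed
qed

theorem corollary1:
  fixes \<gamma> :: "nat \<Rightarrow> real"
  assumes pos: "\<And>N. \<gamma> N > 0"
    and lim0: "\<gamma> \<longlonglongrightarrow> 0"
  shows "((\<lambda>N. real N * \<gamma> N / ln (real N)) \<longlonglongrightarrow> 0 \<longrightarrow>
           (\<forall>a>0. (\<lambda>N. mean_n0 N (a * \<gamma> N) / real N) \<longlonglongrightarrow> 0))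
       \<and> (filterlim (\<lambda>N. real N * \<gamma> N / ln (real N)) at_top sequentially \<longrightarrow>
           (\<forall>a>0. (\<lambda>N. mean_n0 N (a * \<gamma> N) / real N) \<longlonglongrightarrow> 1))"
  apply (intro conjI impI allI)
   apply (rule case1[OF pos]; assumption)
  apply (rule case2[OF pos]; assumption)
  done

end
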